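(* Let $k\geq 2$ be an integer, let $\Psi_k(x) = x^k - 2x^{k-1} - x^{k-2} - \cdots - x - 1$, and let $\gamma = \gamma_1, \gamma_2, \ldots, \gamma_k$ be the roots of $\Psi_k$, labeled so that $\gamma > |\gamma_2| \geq |\gamma_3| \geq \cdots \geq |\gamma_k|$, where $\gamma$ is the unique root of $\Psi_k$ outside the unit circle (it is real and $\gamma>1$). Let $$g_k(z) = \frac{z-1}{k(z^2-3z+1) + z^2 - 1} = \frac{z-1}{(k+1)z^2 - 3kz + k - 1}.$$ Then: (i) if $\gamma_i,\gamma_j$ are roots of $\Psi_k$ with $|\gamma_i| > |\gamma_j|$, then $\dfrac{|\gamma_i|}{|\gamma_j|} > 1 + 1.59^{-k^3}$; (ii) $0.276 \leq g_k(\gamma) \leq 0.5$; (iii) for all $2 \leq i \leq k$, $|g_k(\gamma_i)| < \min\{1, \tfrac{2}{k-2}\}$; (iv) $|\gamma_k| < 1 - \dfrac{\log\gamma}{2k}$ and $|g_k(\gamma_k)| > \dfrac{\log \gamma}{2k(5k+2)}$; (v) if $\gamma_i, \gamma_j$ are distinct roots of $\Psi_k$ with $|\gamma_i| = |\gamma_j|$, then $\gamma_j = \overline{\gamma_i}$.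
   Context: It is known that $\Psi_k$ is irreducible over $\mathbb{Q}$ and has exactly one root outside the unit circle, which is real and greater than $1$; all other roots lie strictly inside the unit circle. $\log$ denotes the natural logarithm. *)

theory Defs
  imports "HOL-Analysis.Analysis" "HOL-Computational_Algebra.Polynomial"
begin

definition Psi :: "nat \<Rightarrow> complex poly" where
  "Psi k = monom 1 k - smult 2 (monom 1 (k - 1)) - (\<Sum>i<k - 1. monom 1 i)"

definition g :: "nat \<Rightarrow> 'a::field \<Rightarrow> 'a" where
  "g k z = (z - 1) / ((of_nat k + 1) * z ^ 2 - 3 * of_nat k * z + of_nat k - 1)"

end

theory Submission
  imports Defs "HOL-Computational_Algebra.Fundamental_Theorem_Algebra"
begin

lemma psi_poly: "poly (Psi k) z = z^k - 2*z^(k-1) - (\<Sum>i<k-1. z^i)"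
  by (simp add: Psi_def poly_monom poly_sum)

lemma psi_Q:
  fixes z :: complex
  shows "(z - 1) * poly (Psi (Suc n)) z = z^n * (z^2 - 3*z + 1) + 1"
proof -
  have "(z - 1) * (\<Sum>i<n. z^i) = z^n - 1" using power_diff_1_eq[of z n] by simp
  then show ?thesis unfolding psi_poly by (simp add: algebra_simps power2_eq_square)
qed

lemma psi_root_iff:
  fixes z :: complex
  assumes "n \<ge> 1"
  shows "poly (Psi (Suc n)) z = 0 \<longleftrightarrow> z^n * (z^2 - 3*z + 1) = -1 \<and> z \<noteq> 1"
proof
  assume h: "poly (Psi (Suc n)) z = 0"
  have "z \<noteq> 1"
  proof
    assume "z = 1"
    with h have "(1::complex) - 2 - of_nat n = 0" unfolding psi_poly by simp
    then have "(of_nat n :: complex) = -1" by (simp add: algebra_simps)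
    then have "Re (of_nat n :: complex) = -1" by simp
    then show False by simp
  qed
  with psi_Q[of z n] h show "z^n * (z^2 - 3*z + 1) = -1 \<and> z \<noteq> 1"
    by (simp add: add_eq_0_iff2)
next
  assume "z^n * (z^2 - 3*z + 1) = -1 \<and> z \<noteq> 1"
  with psi_Q[of z n] show "poly (Psi (Suc n)) z = 0" by simp
qed

definition psir :: "nat \<Rightarrow> real \<Rightarrow> real" where
  "psir n r = r^(Suc n) - 2*r^n - (\<Sum>i<n. r^i)"

lemma psi_real: "poly (Psi (Suc n)) (complex_of_real r) = complex_of_real (psir n r)"
  unfolding psi_poly psir_def by simp

lemma psir_Q: "(r - 1) * psir n r = r^n * (r^2 - 3*r + 1) + 1"
proof -
  have "(r - 1) * (\<Sum>i<n. r^i) = r^n - 1" using power_diff_1_eq[of r n] by simp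
  then show ?thesis unfolding psir_def by (simp add: algebra_simps power2_eq_square)
qed

definition AA :: "real \<Rightarrow> real \<Rightarrow> real" where
  "AA x R = 4*x^2 - 6*(R+1)*x + R^2 + 7*R + 1"

lemma AA_identity:
  fixes z :: complex
  shows "(norm (z^2 - 3*z + 1))^2 = AA (Re z) ((norm z)^2)"
proof -
  obtain x y where z: "z = Complex x y" by (cases z)
  have "(norm (z^2 - 3*z + 1))^2 = (x^2 - y^2 - 3*x + 1)^2 + (2*x*y - 3*y)^2"
    unfolding cmod_power2 z by (simp add: power2_eq_square algebra_simps)
  also have "\<dots> = AA x (x^2 + y^2)" unfolding AA_def by (simp add: power2_eq_square algebra_simps)
  finally show ?thesis unfolding z cmod_power2 by simp
qed

lemma AA_inj:
  assumes R: "R > 0" and x1: "\<bar>x1\<bar> \<le> sqrt R" and x2: "\<bar>x2\<bar> \<le> sqrt R"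
    and eq: "AA x1 R = AA x2 R"
  shows "x1 = x2"
proof -
  define r where "r = sqrt R"
  have R': "R = r^2" using R unfolding r_def by simp
  have "AA x1 R - AA x2 R = (x1 - x2) * (4*(x1+x2) - 6*(R+1))"
    unfolding AA_def by (simp add: power2_eq_square algebra_simps)
  moreover have "4*(x1+x2) - 6*(R+1) < 0"
  proof -
    have "4*(x1+x2) \<le> 8*r" using x1 x2 abs_ge_self[of x1] abs_ge_self[of x2] unfolding r_def by (simp add: algebra_simps)
    moreover have "8*r < 6*(r^2+1)" using zero_le_power2[of "r - 2/3"] by (simp add: power2_eq_square algebra_simps)
    ultimately show ?thesis unfolding R' by linarith
  qed
  ultimately show ?thesis using eq by simp
qed

lemma root_mod:
  fixes z :: complex
  assumes "z^n * (z^2 - 3*z + 1) = -1"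
  shows "((norm z)^2)^n * AA (Re z) ((norm z)^2) = 1"
proof -
  have "norm z ^ n * norm (z^2 - 3*z + 1) = 1"
    using arg_cong[OF assms, of norm] by (simp add: norm_mult norm_power)
  then have "(norm z ^ n * norm (z^2 - 3*z + 1))^2 = 1" by simp
  then show ?thesis unfolding AA_identity[symmetric]
    by (simp add: power_mult_distrib power_mult[symmetric] mult.commute)
qed

lemma psir_div:
  assumes "r > 0"
  shows "psir n r / r^(Suc n) = 1 - 2 * inverse r - (\<Sum>i<n. inverse r ^ (Suc n - i))"
proof -
  have e: "r^i / r^(Suc n) = inverse r ^ (Suc n - i)" if "i < n" for i
  proof -
    have "r^(Suc n) = r^i * r^(Suc n - i)"
      using that by (simp add: power_add[symmetric])
    then show ?thesis using assms by (simp add: power_inverse field_simps)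
  qed
  have "psir n r / r^(Suc n) = 1 - 2 * inverse r - (\<Sum>i<n. r^i / r^(Suc n))"
  proof -
    have "psir n r / r^(Suc n) = r^Suc n / r^Suc n - 2*r^n / r^Suc n - (\<Sum>i<n. r^i) / r^(Suc n)"
      unfolding psir_def by (simp add: diff_divide_distrib)
    also have "(\<Sum>i<n. r^i) / r^(Suc n) = (\<Sum>i<n. r^i / r^(Suc n))"
      by (simp add: sum_divide_distrib)
    also have "r^Suc n / r^Suc n = 1" using assms by simp
    also have "2*r^n / r^Suc n = 2 * inverse r" using assms by (simp add: field_simps)
    finally show ?thesis .
  qed
  also have "(\<Sum>i<n. r^i / r^(Suc n)) = (\<Sum>i<n. inverse r ^ (Suc n - i))"
    by (rule sum.cong[OF refl], rule e) simp
  finally show ?thesis .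
qed

lemma psir_mono:
  assumes "0 < r" "r < s"
  shows "psir n r / r^(Suc n) < psir n s / s^(Suc n)"
proof -
  have inv: "inverse s < inverse r" using assms by (simp add: less_imp_inverse_less)
  have "(\<Sum>i<n. inverse s ^ (Suc n - i)) \<le> (\<Sum>i<n. inverse r ^ (Suc n - i))"
    by (rule sum_mono, rule power_mono) (use inv assms in auto)
  then show ?thesis using inv assms psir_div[of r n] psir_div[of s n] by linarith
qed

lemma psir_sign:
  assumes g1: "\<gamma> > 0" and g0: "psir n \<gamma> = 0" and r: "r > 0"
  shows "r < \<gamma> \<Longrightarrow> psir n r < 0" and "r > \<gamma> \<Longrightarrow> psir n r > 0"
proof -
  assume "r < \<gamma>"
  from psir_mono[OF r this, of n] g0 have "psir n r / r^(Suc n) < 0" by simp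
  moreover have p: "r^Suc n > 0" using r by simp
  moreover have "psir n r = (psir n r / r^Suc n) * r^Suc n" using p r by simp
  ultimately show "psir n r < 0" by (metis mult_neg_pos)
next
  assume "r > \<gamma>"
  from psir_mono[OF g1 this, of n] g0 have "psir n r / r^(Suc n) > 0" by simp
  moreover have p: "r^Suc n > 0" using r by simp
  moreover have "psir n r = (psir n r / r^Suc n) * r^Suc n" using p r by simp
  ultimately show "psir n r > 0" by (metis mult_pos_pos)
qed

lemma Re_Im_eq:
  fixes z :: complex
  assumes "Re z = a" "norm z = a"
  shows "z = complex_of_real a"
proof -
  have "(Re z)^2 + (Im z)^2 = a^2" using assms cmod_power2[of z] by simp
  then have "Im z = 0" using assms by simp
  then show ?thesis using assms by (simp add: complex_eq_iff)
qed

lemma root_nonzero: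
  fixes z :: complex
  assumes "n \<ge> 1" "z^n * (z^2 - 3*z + 1) = -1"
  shows "z \<noteq> 0"
  using assms by (cases n) auto

lemma same_mod_same_Re:
  fixes z w :: complex
  assumes "n \<ge> 1" and z: "z^n * (z^2 - 3*z + 1) = -1" and w: "w^n * (w^2 - 3*w + 1) = -1"
    and eq: "norm z = norm w"
  shows "Re z = Re w"
proof -
  have z0: "z \<noteq> 0" using root_nonzero[OF assms(1) z] .
  define R where "R = (norm z)^2"
  have R: "R > 0" using z0 unfolding R_def by simp
  have "R^n * AA (Re z) R = 1" using root_mod[OF z] unfolding R_def .
  moreover have "R^n * AA (Re w) R = 1" using root_mod[OF w] eq unfolding R_def by simp
  ultimately have "AA (Re z) R = AA (Re w) R" using R by (metis mult_cancel_left power_not_zero less_irrefl)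
  moreover have "\<bar>Re z\<bar> \<le> sqrt R" unfolding R_def by (simp add: abs_Re_le_cmod)
  moreover have "\<bar>Re w\<bar> \<le> sqrt R" unfolding R_def using eq by (simp add: abs_Re_le_cmod)
  ultimately show ?thesis using AA_inj[OF R] by blast
qed

lemma pisot:
  fixes z :: complex
  assumes n: "n \<ge> 1" and g1: "\<gamma> > 1" and g0: "psir n \<gamma> = 0"
    and root: "poly (Psi (Suc n)) z = 0"
  shows "z = complex_of_real \<gamma> \<or> norm z < 1"
proof -
  have zq: "z^n * (z^2 - 3*z + 1) = -1" and z1: "z \<noteq> 1" using psi_root_iff[OF n] root by auto
  have gq: "(complex_of_real \<gamma>)^n * ((complex_of_real \<gamma>)^2 - 3*(complex_of_real \<gamma>) + 1) = -1"
    using psi_root_iff[OF n, of "complex_of_real \<gamma>"] psi_real[of n \<gamma>] g0 by simp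
  have oq: "(1::complex)^n * (1^2 - 3*1 + 1) = -1" by simp
  define r where "r = norm z"
  have z0: "z \<noteq> 0" using root_nonzero[OF n zq] .
  then have r0: "r > 0" unfolding r_def by simp
  have "z^(Suc n) = 2*z^n + (\<Sum>i<n. z^i)" using root unfolding psi_poly by (simp add: algebra_simps)
  then have "r^(Suc n) = norm (2*z^n + (\<Sum>i<n. z^i))" unfolding r_def by (metis norm_power)
  also have "\<dots> \<le> norm (2*z^n) + norm (\<Sum>i<n. z^i)" by (rule norm_triangle_ineq)
  also have "norm (\<Sum>i<n. z^i) \<le> (\<Sum>i<n. r^i)"
    unfolding r_def by (rule order_trans[OF norm_sum]) (simp add: norm_power)
  finally have "psir n r \<le> 0" unfolding psir_def r_def by (simp add: norm_mult norm_power)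
  then have rg: "r \<le> \<gamma>" using psir_sign(2)[of \<gamma> n r] g1 g0 r0 by force
  have b: "z = complex_of_real \<gamma>" if "r = \<gamma>"
  proof -
    have "Re z = Re (complex_of_real \<gamma>)"
      using same_mod_same_Re[OF n zq gq] that g1 unfolding r_def by simp
    then show ?thesis using Re_Im_eq[of z \<gamma>] that unfolding r_def by simp
  qed
  have c: False if "1 < r" "r < \<gamma>"
  proof -
    have "3 * z^(Suc n) = z^(n+2) + z^n + 1" using zq by (simp add: algebra_simps power2_eq_square)
    then have "norm (3 * z^(Suc n)) = norm (z^(n+2) + z^n + 1)" by simp
    then have "3 * r^(Suc n) = norm (z^(n+2) + z^n + 1)" unfolding r_def by (simp only: norm_mult norm_power) simp
    also have "\<dots> \<le> r^(n+2) + r^n + 1" unfolding r_def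
      by (rule order_trans[OF norm_triangle_ineq], rule add_mono, rule order_trans[OF norm_triangle_ineq])
         (auto simp: norm_power norm_mult)
    finally have "r^n * (r^2 - 3*r + 1) + 1 \<ge> 0" by (simp add: algebra_simps power2_eq_square)
    then have "(r - 1) * psir n r \<ge> 0" using psir_Q by simp
    moreover have "psir n r < 0" using psir_sign(1)[of \<gamma> n r] g1 g0 r0 that by force
    ultimately show False using that mult_pos_neg[of "r - 1" "psir n r"] by linarith
  qed
  have d: False if "r = 1"
  proof -
    have "Re z = Re 1" using same_mod_same_Re[OF n zq oq] that unfolding r_def by simp
    then have "z = 1" using Re_Im_eq[of z 1] that unfolding r_def by simp
    then show False using z1 by simp
  qed
  show ?thesis
  proof (cases "r < 1")
    case True then show ?thesis unfolding r_def by simp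
  next
    case False
    then show ?thesis using b c d rg by force
  qed
qed

lemma root_cnj:
  fixes z :: complex
  assumes n: "n \<ge> 1" and root: "poly (Psi (Suc n)) z = 0"
  shows "poly (Psi (Suc n)) (cnj z) = 0"
proof -
  have zq: "z^n * (z^2 - 3*z + 1) = -1" and z1: "z \<noteq> 1" using psi_root_iff[OF n] root by auto
  have "cnj (z^n * (z^2 - 3*z + 1)) = cnj (-1)" using zq by simp
  then have "(cnj z)^n * ((cnj z)^2 - 3*(cnj z) + 1) = -1" by simp
  moreover have "cnj z \<noteq> 1" using z1 by (metis complex_cnj_cnj complex_cnj_one)
  ultimately show ?thesis using psi_root_iff[OF n] by simp
qed

lemma part_v:
  fixes zi zj :: complex
  assumes n: "n \<ge> 1" and ri: "poly (Psi (Suc n)) zi = 0" and rj: "poly (Psi (Suc n)) zj = 0"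
    and ne: "zi \<noteq> zj" and eq: "norm zi = norm zj"
  shows "zj = cnj zi"
proof -
  have qi: "zi^n * (zi^2 - 3*zi + 1) = -1" using psi_root_iff[OF n] ri by auto
  have qj: "zj^n * (zj^2 - 3*zj + 1) = -1" using psi_root_iff[OF n] rj by auto
  have re: "Re zi = Re zj" using same_mod_same_Re[OF n qi qj eq] .
  have "(Im zi)^2 = (Im zj)^2" using eq cmod_power2[of zi] cmod_power2[of zj] re by simp
  then have "Im zj = Im zi \<or> Im zj = - Im zi" by (metis power2_eq_iff)
  moreover have "Im zj \<noteq> Im zi" using ne re by (metis complex_eqI)
  ultimately have "Im zj = - Im zi" by blast
  then show ?thesis using re by (simp add: complex_eq_iff)
qed

lemma two_le_pow: "real (Suc n) \<le> 2^n"
proof (induction n)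
  case 0 then show ?case by simp
next
  case (Suc n)
  have "(1::real) \<le> 2^n" by simp
  with Suc show ?case by simp
qed

lemma gamma_facts:
  assumes n: "n \<ge> 1" and g1: "\<gamma> > 1" and g0: "psir n \<gamma> = 0"
  shows "\<gamma> > 2" "\<gamma>^n * (\<gamma>^2 - 3*\<gamma> + 1) = -1" "\<gamma> < 2.6181"
proof -
  have "(2 - 1) * psir n 2 = 2^n * (2^2 - 3*2 + 1) + 1" using psir_Q[of 2 n] by simp
  then have p2: "psir n 2 = 1 - 2^n" by simp
  have "(2::real)^n \<ge> 2^1" using n by (intro power_increasing) auto
  then have "psir n 2 < 0" using p2 by simp
  moreover have "\<not> (2 > \<gamma>)" using psir_sign(2)[of \<gamma> n 2] g1 g0 calculation by force
  moreover have "\<gamma> \<noteq> 2" using g0 calculation by auto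
  ultimately show g2: "\<gamma> > 2" by auto
  show gq: "\<gamma>^n * (\<gamma>^2 - 3*\<gamma> + 1) = -1" using psir_Q[of \<gamma> n] g0 by simp
  have "\<gamma>^n > 0" using g1 by simp
  then have "\<gamma>^2 - 3*\<gamma> + 1 < 0"
  proof -
    assume p: "\<gamma>^n > 0"
    show ?thesis
    proof (rule ccontr)
      assume "\<not> \<gamma>^2 - 3*\<gamma> + 1 < 0"
      then have "\<gamma>^n * (\<gamma>^2 - 3*\<gamma> + 1) \<ge> 0" using p by simp
      then show False using gq by simp
    qed
  qed
  then have u: "(\<gamma> - 1.5)^2 < 1.25" by (simp add: power2_eq_square algebra_simps)
  show "\<gamma> < 2.6181"
  proof (rule ccontr)
    assume "\<not> \<gamma> < 2.6181"
    then have "1.1181 \<le> \<gamma> - 1.5" by simp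
    then have "(1.1181::real)^2 \<le> (\<gamma> - 1.5)^2" by (rule power_mono) simp
    then show False using u by (simp add: power_divide)
  qed
qed

lemma part_ii:
  assumes n: "n \<ge> 1" and g1: "\<gamma> > 1" and g0: "psir n \<gamma> = 0"
  shows "0.276 \<le> g (Suc n) \<gamma> \<and> g (Suc n) \<gamma> \<le> 0.5"
proof -
  note gf = gamma_facts[OF n g1 g0]
  define K where "K = real (Suc n)"
  define u where "u = \<gamma>^2 - 3*\<gamma> + 1"
  define c where "c = K / \<gamma>^n"
  have gn: "\<gamma>^n > 0" using g1 by simp
  have "K \<le> 2^n" unfolding K_def by (rule two_le_pow)
  also have "(2::real)^n \<le> \<gamma>^n" using gf(1) by (intro power_mono) auto
  finally have c1: "c \<le> 1" unfolding c_def using gn by simp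
  have c0: "c > 0" unfolding c_def K_def using gn by simp
  have uu: "u * \<gamma>^n = -1" using gf(2) unfolding u_def by (simp add: mult.commute)
  have "u = (u * \<gamma>^n) / \<gamma>^n" using gn g1 by simp
  then have "u = -1 / \<gamma>^n" using uu by simp
  then have Ku: "K * u = - c" unfolding c_def by simp
  have D: "(of_nat (Suc n) + 1) * \<gamma>^2 - 3 * of_nat (Suc n) * \<gamma> + of_nat (Suc n) - 1 = \<gamma>^2 - 1 - c"
    using Ku unfolding K_def u_def by (simp add: algebra_simps)
  have gdef: "g (Suc n) \<gamma> = (\<gamma> - 1) / (\<gamma>^2 - 1 - c)" unfolding g_def D ..
  have "2*2 < \<gamma>*\<gamma>" using gf(1) by (intro mult_strict_mono) auto
  then have gg: "4 < \<gamma>^2" by (simp add: power2_eq_square)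
  have Dpos: "\<gamma>^2 - 1 - c > 0" using gg c1 by simp
  have up: "(\<gamma> - 1) / (\<gamma>^2 - 1 - c) \<le> 0.5"
  proof -
    have "1*1 \<le> (\<gamma> - 1)*(\<gamma> - 1)" using gf(1) by (intro mult_mono) auto
    then have "1 \<le> (\<gamma> - 1)^2" by (simp add: power2_eq_square)
    then have "2 * (\<gamma> - 1) \<le> \<gamma>^2 - 1 - c" using c1 by (simp add: power2_eq_square algebra_simps)
    then show ?thesis using Dpos by (simp add: divide_le_eq)
  qed
  have lo: "69/250 \<le> (\<gamma> - 1) / (\<gamma>^2 - 1 - c)"
  proof -
    have "69/250 * (\<gamma> + 1) \<le> (1::real)" using gf(3) by simp
    then have "69/250 * (\<gamma> + 1) * (\<gamma> - 1) \<le> 1 * (\<gamma> - 1)" using g1 by (intro mult_right_mono) auto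
    then have "69/250 * (\<gamma>^2 - 1) \<le> \<gamma> - 1" by (simp add: power2_eq_square algebra_simps)
    moreover have "69/250 * (\<gamma>^2 - 1 - c) = 69/250 * (\<gamma>^2 - 1) - 69/250 * c" by (simp add: right_diff_distrib)
    moreover have "69/250 * c > 0" using c0 by simp
    ultimately have "69/250 * (\<gamma>^2 - 1 - c) \<le> \<gamma> - 1" by linarith
    then show ?thesis using Dpos by (simp add: le_divide_eq)
  qed
  show ?thesis using up lo gdef by simp
qed

lemma inv_helper:
  fixes a b :: real
  assumes "a * b = 1" "b > 0"
  shows "a = 1 / b"
  using assms by (simp add: eq_divide_eq)

lemma D_props:
  fixes z :: complex
  assumes n: "n \<ge> 1" and zq: "z^n * (z^2 - 3*z + 1) = -1" and z1: "norm z < 1"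
  defines "D \<equiv> (of_nat (Suc n) + 1) * z^2 - 3 * of_nat (Suc n) * z + of_nat (Suc n) - 1"
  shows "norm D \<ge> real (Suc n) / norm z ^ n - norm (z^2 - 1)"
    and "norm (z^2 - 1) < 2"
    and "norm D < 5 * real (Suc n) + 2"
    and "norm D > real (Suc n) - 2"
proof -
  define K where "K = real (Suc n)"
  define u where "u = z^2 - 3*z + 1"
  have z0: "z \<noteq> 0" using root_nonzero[OF n zq] .
  have Dk: "D = of_real K * u + (z^2 - 1)" unfolding D_def u_def K_def by (simp add: algebra_simps)
  have nu: "norm z ^ n * norm u = 1" using arg_cong[OF zq, of norm] unfolding u_def by (simp add: norm_mult norm_power)
  have zn: "norm z ^ n > 0" using z0 by simp
  have zn1: "norm z ^ n \<le> 1" using z1 by (simp add: power_le_one)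
  have nuv: "norm u = 1 / norm z ^ n" using inv_helper[of "norm u" "norm z ^ n"] nu zn by (simp add: mult.commute)
  have K0: "K > 0" unfolding K_def by simp
  have Kn: "norm (of_real K * u) = K * norm u" using K0 by (simp only: norm_mult norm_of_real abs_of_pos)
  have Ku: "norm (of_real K * u) = K / norm z ^ n" unfolding Kn nuv by simp
  have "norm (z^2 - 1) \<le> norm (z^2) + norm (1::complex)" by (rule norm_triangle_ineq4)
  also have "norm (z^2) < 1" using z1 by (simp add: norm_power power_less_one_iff)
  finally show z21: "norm (z^2 - 1) < 2" by simp
  have "norm D \<ge> norm (of_real K * u) - norm (z^2 - 1)" unfolding Dk by (metis norm_diff_ineq diff_minus_eq_add norm_minus_cancel)
  then show D1: "norm D \<ge> real (Suc n) / norm z ^ n - norm (z^2 - 1)" using Ku unfolding K_def by simp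
  have "K \<le> K / norm z ^ n" using zn zn1 unfolding K_def by (simp add: le_divide_eq)
  then show "norm D > real (Suc n) - 2" using D1 z21 unfolding K_def by linarith
  have "norm u \<le> norm (z^2) + norm (3*z) + 1" unfolding u_def
    by (rule order_trans[OF norm_triangle_ineq], rule add_mono, rule norm_triangle_ineq4) auto
  also have "\<dots> < 5" using z1 \<open>norm (z^2) < 1\<close> by (simp add: norm_mult)
  finally have u5: "norm u < 5" .
  have "norm D \<le> norm (of_real K * u) + norm (z^2 - 1)" unfolding Dk by (rule norm_triangle_ineq)
  also note Kn
  also have "K * norm u < K * 5" using u5 K0 by simp
  finally show "norm D < 5 * real (Suc n) + 2" using z21 unfolding K_def by linarith
qed

lemma psi3: "poly (Psi 3) w = w^3 - 2*w^2 - w - 1"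
  by (simp add: psi_poly numeral_3_eq_3 algebra_simps power2_eq_square)

lemma psi2: "poly (Psi 2) w = w^2 - 2*w - 1"
  by (simp add: psi_poly numeral_2_eq_2 algebra_simps)

lemma k3_inner:
  fixes z :: complex
  assumes g1: "\<gamma> > 1" and g0: "psir 2 \<gamma> = 0"
    and root: "poly (Psi 3) z = 0" and zg: "z \<noteq> complex_of_real \<gamma>"
  shows "(norm z)^2 = 1 / \<gamma>"
proof -
  have n: "(2::nat) \<ge> 1" by simp
  have r3: "poly (Psi (Suc 2)) z = 0" using root by (simp add: numeral_3_eq_3)
  have z1: "norm z < 1" using pisot[OF n g1 g0 r3] zg by auto
  have rc: "poly (Psi (Suc 2)) (cnj z) = 0" using root_cnj[OF n r3] .
  define G where "G = complex_of_real \<gamma>"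
  have G0: "G^3 - 2*G^2 - G - 1 = 0" using psi_real[of 2 \<gamma>] g0 psi3[of G] unfolding G_def
    by (simp add: numeral_3_eq_3)
  have E: "w^2 + w*G + G^2 - 2*(w + G) - 1 = 0" if "poly (Psi 3) w = 0" "w \<noteq> G" for w
  proof -
    have "w^3 - 2*w^2 - w - 1 = 0" using that psi3 by simp
    then have "(w - G) * (w^2 + w*G + G^2 - 2*(w + G) - 1) = 0" using G0
      by (simp add: algebra_simps power2_eq_square power3_eq_cube)
    then show ?thesis using that by simp
  qed
  have Ez: "z^2 + z*G + G^2 - 2*(z + G) - 1 = 0" using E root zg unfolding G_def by simp
  have cz1: "norm (cnj z) < 1" using z1 by simp
  have "cnj z \<noteq> G"
  proof
    assume "cnj z = G"
    then have "norm (cnj z) = \<gamma>" unfolding G_def using g1 by simp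
    then show False using cz1 g1 by simp
  qed
  then have Ec: "(cnj z)^2 + (cnj z)*G + G^2 - 2*(cnj z + G) - 1 = 0" using E rc by (simp add: numeral_3_eq_3)
  have im: "Im z \<noteq> 0"
  proof
    assume "Im z = 0"
    then have zx: "z = complex_of_real (Re z)" by (simp add: complex_eq_iff)
    define x where "x = Re z"
    have "\<bar>x\<bar> < 1" using z1 zx unfolding x_def by (metis norm_of_real)
    have "complex_of_real (x^3 - 2*x^2 - x - 1) = 0" using root psi3[of z] zx unfolding x_def by simp
    then have xe: "x^3 - 2*x^2 - x - 1 = 0" by (metis of_real_eq_0_iff)
    have "x * (x^2 - 1) < 1"
    proof (cases "x \<ge> 0")
      case True
      have "x^2 \<le> 1" using \<open>\<bar>x\<bar> < 1\<close> by (simp add: abs_square_le_1)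
      then have "x * (x^2 - 1) \<le> 0" using True by (simp add: mult_nonneg_nonpos)
      then show ?thesis by simp
    next
      case False
      have "0 \<le> 1 - x^2" using \<open>\<bar>x\<bar> < 1\<close> by (simp add: abs_square_le_1)
      have "(-x) * (1 - x^2) \<le> (-x) * 1" using False \<open>0 \<le> 1 - x^2\<close> by (intro mult_left_mono) auto
      then show ?thesis using \<open>\<bar>x\<bar> < 1\<close> False by (simp add: algebra_simps)
    qed
    then show False using xe zero_le_power2[of x] by (simp add: algebra_simps power2_eq_square power3_eq_cube)
  qed
  have "z \<noteq> cnj z" using im by (metis cnj.sel(2) neg_equal_zero)
  moreover have idt: "(z - cnj z) * (z + cnj z + G - 2) = (z^2 + z*G + G^2 - 2*(z + G) - 1) - ((cnj z)^2 + (cnj z)*G + G^2 - 2*(cnj z + G) - 1)"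
    by (simp add: algebra_simps power2_eq_square)
  then have "(z - cnj z) * (z + cnj z + G - 2) = 0" unfolding idt Ez Ec by simp
  ultimately have "z + cnj z + G = 2" by simp
  then have s: "z + cnj z = 2 - G" by (simp add: eq_diff_eq)
  have "z * cnj z = (z + cnj z)*z - z^2" by (simp add: algebra_simps power2_eq_square)
  also have "\<dots> = (2 - G)*z - z^2" using s by simp
  also have "\<dots> = G^2 - 2*G - 1 - (z^2 + z*G + G^2 - 2*(z + G) - 1)" by (simp add: algebra_simps power2_eq_square)
  also have "\<dots> = G^2 - 2*G - 1" unfolding Ez by simp
  finally have "z * cnj z = G^2 - 2*G - 1" .
  moreover have "G * (G^2 - 2*G - 1) = 1" using G0 by (simp add: algebra_simps power2_eq_square power3_eq_cube)
  ultimately have "G * (z * cnj z) = 1" by simp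
  moreover have "z * cnj z = complex_of_real ((norm z)^2)" by (rule complex_norm_square[symmetric])
  ultimately have "complex_of_real (\<gamma> * (norm z)^2) = 1" unfolding G_def by (simp only: of_real_mult)
  then have "\<gamma> * (norm z)^2 = 1" by (metis of_real_eq_1_iff)
  then show ?thesis using g1 by (simp add: field_simps)
qed

lemma norm_z_minus_1:
  fixes z :: complex
  assumes "norm z < 1"
  shows "norm (z - 1) < 2"
  using norm_triangle_ineq4[of z 1] assms by simp

lemma part_iii:
  fixes z :: complex
  assumes n: "n \<ge> 1" and g1: "\<gamma> > 1" and g0: "psir n \<gamma> = 0"
    and root: "poly (Psi (Suc n)) z = 0" and zg: "z \<noteq> complex_of_real \<gamma>"
  shows "norm (g (Suc n) z) < (if Suc n = 2 then 1 else min 1 (2 / (real (Suc n) - 2)))"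
proof -
  have z1: "norm z < 1" using pisot[OF n g1 g0 root] zg by auto
  have zq: "z^n * (z^2 - 3*z + 1) = -1" using psi_root_iff[OF n] root by auto
  define D where "D = (of_nat (Suc n) + 1) * z^2 - 3 * of_nat (Suc n) * z + of_nat (Suc n) - (1::complex)"
  note DP = D_props[OF n zq z1, folded D_def]
  have gz: "norm (g (Suc n) z) = norm (z - 1) / norm D" unfolding g_def D_def by (simp add: norm_divide)
  have zm: "norm (z - 1) < 2" using norm_z_minus_1[OF z1] .
  consider "n = 1" | "n = 2" | "n \<ge> 3" using n by linarith
  then show ?thesis
  proof cases
    case 1
    have "poly (Psi 2) z = 0" using root 1 by (simp add: numeral_2_eq_2)
    then have "z^2 - 2*z - 1 = 0" using psi2 by simp
    moreover have "D = 3 * (z^2 - 2*z - 1) + 4" unfolding D_def 1 by (simp add: algebra_simps)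
    ultimately have "D = 4" by simp
    then have "norm (g (Suc n) z) < 1" using gz zm by simp
    then show ?thesis using 1 by simp
  next
    case 2
    have "poly (Psi 3) z = 0" using root 2 by (simp add: numeral_3_eq_3)
    from k3_inner[OF g1 _ this zg] g0 2 have nz: "(norm z)^2 = 1 / \<gamma>" by simp
    have g2: "\<gamma> > 2" using gamma_facts(1)[OF n g1 g0] .
    have "real (Suc n) / norm z ^ n = 3 * \<gamma>" using nz 2 g1 by simp
    then have "norm D > 4" using DP(1,2) g2 by linarith
    then have "norm (z - 1) / norm D < 1" using zm by (simp add: divide_less_eq)
    then show ?thesis using 2 gz by simp
  next
    case 3
    have Dp: "norm D > real (Suc n) - 2" using DP(4) .
    have K2: "real (Suc n) - 2 \<ge> 2" using 3 by simp
    have "norm D > 0" using Dp K2 by linarith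
    then have "norm (z - 1) / norm D < 2 / norm D" using zm by (rule divide_strict_right_mono[rotated])
    also have "\<dots> < 2 / (real (Suc n) - 2)" using Dp K2 \<open>norm D > 0\<close> by (intro divide_strict_left_mono) (auto intro: mult_pos_pos)
    finally have lt: "norm (g (Suc n) z) < 2 / (real (Suc n) - 2)" using gz by simp
    have "2 / (real (Suc n) - 2) \<le> 1" using K2 by simp
    then have "min 1 (2 / (real (Suc n) - 2)) = 2 / (real (Suc n) - 2)" by simp
    then show ?thesis using lt 3 by simp
  qed
qed

lemma psi_coeff: "coeff (Psi k) j = (if j = k then 1 else 0) - 2*(if j = k-1 then 1 else 0) - (if j < k-1 then 1 else 0)"
  unfolding Psi_def by (simp add: coeff_sum coeff_monom)

lemma psi_degree: "degree (Psi (Suc n)) = Suc n"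
proof (rule antisym)
  show "degree (Psi (Suc n)) \<le> Suc n" by (rule degree_le) (auto simp: psi_coeff)
  show "Suc n \<le> degree (Psi (Suc n))" by (rule le_degree) (simp add: psi_coeff)
qed

lemma psi_lead: "lead_coeff (Psi (Suc n)) = 1"
  unfolding psi_degree by (simp add: psi_coeff)

lemma psi_nz: "Psi (Suc n) \<noteq> 0"
  using psi_lead[of n] by auto

lemma psi_at0: "n \<ge> 1 \<Longrightarrow> poly (Psi (Suc n)) 0 = -1"
  by (simp add: poly_0_coeff_0 psi_coeff)

lemma prod_bound:
  fixes M :: "complex multiset"
  assumes "\<And>x. x \<in># M \<Longrightarrow> m \<le> norm x" "0 \<le> m"
  shows "m ^ size M \<le> norm (\<Prod>x\<in>#M. - x)"
  using assms
proof (induction M)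
  case empty then show ?case by simp
next
  case (add x M)
  have "m ^ size M \<le> norm (\<Prod>x\<in>#M. - x)" using add by auto
  moreover have "m \<le> norm x" using add by auto
  ultimately have "m * m ^ size M \<le> norm x * norm (\<Prod>x\<in>#M. - x)"
    using add.prems(2) by (intro mult_mono) auto
  then show ?case by (simp add: norm_mult)
qed

lemma min_root_bound:
  fixes zk :: complex
  assumes n: "n \<ge> 1" and g1: "\<gamma> > 1" and groot: "poly (Psi (Suc n)) (complex_of_real \<gamma>) = 0"
    and zk: "poly (Psi (Suc n)) zk = 0"
    and mn: "\<And>z. poly (Psi (Suc n)) z = 0 \<Longrightarrow> norm zk \<le> norm z"
  shows "\<gamma> * norm zk ^ n \<le> 1"
proof -
  define p where "p = Psi (Suc n)"
  define P where "P = proots p"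
  define G where "G = complex_of_real \<gamma>"
  have p0: "p \<noteq> 0" unfolding p_def by (rule psi_nz)
  have dec: "smult (lead_coeff p) (\<Prod>x\<in>#P. [:-x, 1:]) = p"
    unfolding P_def by (rule complex_poly_decompose_multiset)
  have "poly p 0 = poly (smult (lead_coeff p) (\<Prod>x\<in>#P. [:-x, 1:])) 0" using dec by simp
  also have "\<dots> = (\<Prod>x\<in>#P. - x)" unfolding p_def psi_lead by (simp add: poly_prod_mset)
  finally have "poly p 0 = (\<Prod>x\<in>#P. - x)" .
  then have "(\<Prod>x\<in>#P. - x) = -1" unfolding p_def using psi_at0[OF n] by simp
  then have np: "norm (\<Prod>x\<in>#P. - x) = 1" by (simp only: norm_minus_cancel norm_one)
  have GP: "G \<in># P" unfolding P_def G_def using p0 groot p_def by simp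
  define P' where "P' = P - {#G#}"
  have PP: "P = add_mset G P'" unfolding P'_def using GP by simp
  have "size P = Suc n" unfolding P_def p_def using size_proots_complex psi_degree by metis
  then have sP: "size P' = n" using PP by simp
  have roots: "m \<in># P' \<Longrightarrow> poly p m = 0" for m
    using p0 unfolding P'_def P_def by (metis in_diffD set_count_proots mem_Collect_eq)
  have "norm zk ^ size P' \<le> norm (\<Prod>x\<in>#P'. - x)"
    by (rule prod_bound) (use roots mn p_def in auto)
  moreover have "norm (\<Prod>x\<in>#P. - x) = \<gamma> * norm (\<Prod>x\<in>#P'. - x)"
    unfolding PP G_def using g1 by (simp add: norm_mult)
  ultimately have "norm zk ^ n \<le> norm (\<Prod>x\<in>#P'. - x)" "\<gamma> * norm (\<Prod>x\<in>#P'. - x) = 1"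
    using np sP by auto
  then show ?thesis using g1 mult_left_mono[of "norm zk ^ n" "norm (\<Prod>x\<in>#P'. - x)" \<gamma>] by simp
qed

lemma exp1_gt: "exp 1 > (2.6181::real)"
  using e_approx_32 by (simp add: abs_if split: if_split_asm)

lemma part_iv:
  fixes zk :: complex
  assumes n: "n \<ge> 1" and g1: "\<gamma> > 1" and g0: "psir n \<gamma> = 0"
    and groot: "poly (Psi (Suc n)) (complex_of_real \<gamma>) = 0"
    and zk: "poly (Psi (Suc n)) zk = 0"
    and mn: "\<And>z. poly (Psi (Suc n)) z = 0 \<Longrightarrow> norm zk \<le> norm z"
  shows "norm zk < 1 - ln \<gamma> / (2 * real (Suc n)) \<and>
         norm (g (Suc n) zk) > ln \<gamma> / (2 * real (Suc n) * (5 * real (Suc n) + 2))"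
proof -
  define K where "K = real (Suc n)"
  have K0: "K > 0" unfolding K_def by simp
  have b: "\<gamma> * norm zk ^ n \<le> 1" using min_root_bound[OF n g1 groot zk mn] .
  have zq: "zk^n * (zk^2 - 3*zk + 1) = -1" using psi_root_iff[OF n] zk by auto
  have z0: "norm zk > 0" using root_nonzero[OF n zq] by simp
  have "\<gamma> < exp 1" using gamma_facts(3)[OF n g1 g0] exp1_gt by linarith
  then have lg1: "ln \<gamma> < 1" using g1 by (metis exp_less_cancel_iff exp_ln less_trans zero_less_one)
  have lg0: "ln \<gamma> > 0" using g1 by simp
  define t where "t = ln \<gamma> / real n"
  have t0: "t > 0" unfolding t_def using lg0 n by simp
  have t1: "t < 1" unfolding t_def using lg1 n by (simp add: divide_less_eq)
  have "norm zk ^ n \<le> 1 / \<gamma>" using b g1 by (simp add: field_simps mult.commute)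
  then have "ln (norm zk ^ n) \<le> ln (1 / \<gamma>)" using z0 g1 by (subst ln_le_cancel_iff) auto
  then have "real n * ln (norm zk) \<le> - ln \<gamma>" using z0 g1 by (simp add: ln_realpow ln_div)
  then have "ln (norm zk) * real n \<le> - ln \<gamma>" by (simp add: mult.commute)
  moreover have nn: "real n > 0" using n by simp
  ultimately have "ln (norm zk) \<le> (- ln \<gamma>) / real n" using pos_le_divide_eq[OF nn] by blast
  then have lz: "ln (norm zk) \<le> - t" unfolding t_def by simp
  have "norm zk = exp (ln (norm zk))" using z0 by simp
  also have "\<dots> \<le> exp (- t)" using lz by simp
  also have "\<dots> = 1 / exp t" by (simp add: exp_minus inverse_eq_divide)
  also have "\<dots> \<le> 1 / (1 + t)" using t0 exp_ge_add_one_self[of t] by (intro divide_left_mono) auto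
  also have "\<dots> < 1 - t / 2"
  proof -
    have "t * t < t * 1" using t0 t1 by (intro mult_strict_left_mono) auto
    then have "1 < (1 + t) * (1 - t / 2)" by (simp add: algebra_simps)
    then show ?thesis using t0 by (simp add: divide_less_eq mult.commute)
  qed
  also have "\<dots> \<le> 1 - ln \<gamma> / (2 * K)"
  proof -
    have "ln \<gamma> / (2 * K) \<le> ln \<gamma> / (2 * real n)" unfolding K_def using lg0 n
      by (intro divide_left_mono) auto
    then show ?thesis unfolding t_def by simp
  qed
  finally have p1: "norm zk < 1 - ln \<gamma> / (2 * K)" .
  have z1: "norm zk < 1" using p1 lg0 unfolding K_def by (smt (verit) divide_pos_pos of_nat_0_less_iff zero_less_Suc)
  define D where "D = (of_nat (Suc n) + 1) * zk^2 - 3 * of_nat (Suc n) * zk + of_nat (Suc n) - (1::complex)"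
  note DP = D_props[OF n zq z1, folded D_def]
  have gz: "norm (g (Suc n) zk) = norm (zk - 1) / norm D" unfolding g_def D_def by (simp add: norm_divide)
  have Dp: "norm D > 0" using DP(4) n by linarith
  have Du: "norm D < 5 * K + 2" using DP(3) unfolding K_def .
  have "1 - norm zk \<le> norm (zk - 1)" using norm_triangle_ineq2[of 1 zk] by (simp add: norm_minus_commute)
  then have zm: "norm (zk - 1) > ln \<gamma> / (2 * K)" using p1 by linarith
  have c0: "ln \<gamma> / (2 * K) > 0" using lg0 unfolding K_def by simp
  have "ln \<gamma> / (2 * K * (5 * K + 2)) = (ln \<gamma> / (2 * K)) / (5 * K + 2)" by simp
  also have "\<dots> < (ln \<gamma> / (2 * K)) / norm D" using c0 Dp Du K0 by (intro divide_strict_left_mono) (auto intro: mult_pos_pos)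
  also have "\<dots> < norm (zk - 1) / norm D" using zm Dp by (intro divide_strict_right_mono)
  finally have "norm (g (Suc n) zk) > ln \<gamma> / (2 * K * (5 * K + 2))" using gz by simp
  then show ?thesis using p1 unfolding K_def by simp
qed

lemma taylor_step:
  fixes a b :: complex
  shows "b^(Suc m) - a^(Suc m) - of_nat (Suc m) * a^m * (b - a) =
         b * (b^m - a^m - of_nat m * a^(m-1) * (b - a)) + of_nat m * a^(m-1) * (b - a)^2"
proof (cases m)
  case 0 then show ?thesis by simp
next
  case (Suc j)
  then show ?thesis by (simp add: algebra_simps power2_eq_square)
qed

lemma taylor_pow:
  fixes a b :: complex
  assumes a: "norm a \<le> 1" and b: "norm b \<le> 1"
  shows "norm (b^m - a^m - of_nat m * a^(m-1) * (b - a)) \<le> real m * (real m - 1) / 2 * norm (b - a)^2"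
proof (induction m)
  case 0 then show ?case by simp
next
  case (Suc m)
  define E where "E = b^m - a^m - of_nat m * a^(m-1) * (b - a)"
  have "norm (b^(Suc m) - a^(Suc m) - of_nat (Suc m) * a^(Suc m - 1) * (b - a))
        = norm (b * E + of_nat m * a^(m-1) * (b - a)^2)" unfolding E_def using taylor_step[of b m a] by simp
  also have "\<dots> \<le> norm (b * E) + norm (of_nat m * a^(m-1) * (b - a)^2)" by (rule norm_triangle_ineq)
  also have "norm (b * E) \<le> norm E" using b by (simp add: norm_mult mult_left_le_one_le)
  also have "norm (of_nat m * a^(m-1) * (b - a)^2) \<le> real m * norm (b - a)^2"
  proof -
    have "norm (a^(m-1)) \<le> 1" using a by (simp add: norm_power power_le_one)
    then have "real m * norm (a^(m-1)) * norm (b - a)^2 \<le> real m * 1 * norm (b - a)^2"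
      by (intro mult_right_mono mult_left_mono) auto
    then show ?thesis by (simp add: norm_mult norm_power)
  qed
  finally have "norm (b^(Suc m) - a^(Suc m) - of_nat (Suc m) * a^(Suc m - 1) * (b - a))
      \<le> real m * (real m - 1) / 2 * norm (b - a)^2 + real m * norm (b - a)^2"
    using Suc.IH unfolding E_def by linarith
  also have "\<dots> = real (Suc m) * (real (Suc m) - 1) / 2 * norm (b - a)^2" by (simp add: field_simps)
  finally show ?case .
qed

lemma pow_diff_le:
  fixes a b :: real
  assumes "0 \<le> b" "b \<le> a" "a \<le> 1"
  shows "a^n - b^n \<le> real n * (a - b)"
proof (induction n)
  case 0 then show ?case by simp
next
  case (Suc n)
  have "a^(Suc n) - b^(Suc n) = a * (a^n - b^n) + b^n * (a - b)" by (simp add: algebra_simps)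
  also have "a * (a^n - b^n) \<le> a^n - b^n"
    using assms power_mono[of b a n] by (simp add: mult_left_le_one_le)
  also have "b^n * (a - b) \<le> 1 * (a - b)"
    using assms by (intro mult_right_mono) (auto simp: power_le_one)
  finally show ?case using Suc.IH by (simp add: algebra_simps)
qed

lemma big_base: "(150000::real) * 64 < 1.59^64"
proof -
  have "(40::real) \<le> 1.59^8" by (simp add: power_divide)
  then have "(40::real)^8 \<le> (1.59^8)^8" by (rule power_mono) simp
  then have "(40::real)^8 \<le> 1.59^64" by (simp add: power_mult[symmetric])
  then show ?thesis by simp
qed

lemma big_num: "m \<ge> 64 \<Longrightarrow> (150000::real) * real m < 1.59^m"
proof (induction m rule: dec_induct)
  case base then show ?case using big_base by simp
next
  case (step m)
  have "(150000::real) * real (Suc m) \<le> 150000 * real m * 1.59" using step.hyps by simp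
  also have "\<dots> < 1.59^m * 1.59" using step.IH by simp
  finally show ?case by (simp add: mult.commute)
qed

lemma big_k: "k \<ge> 4 \<Longrightarrow> (150000::real) * real k ^ 3 < 1.59 ^ (k^3)"
proof -
  assume "k \<ge> 4"
  then have "k^3 \<ge> 4^3" by (intro power_mono) auto
  then have "k^3 \<ge> 64" by simp
  from big_num[OF this] show ?thesis by simp
qed

lemma sep:
  fixes a b :: complex
  assumes n: "n \<ge> 2" and a1: "norm a < 1" and b1: "norm b < 1" and ab: "a \<noteq> b"
    and aq: "a^n * (a^2 - 3*a + 1) = -1" and bq: "b^n * (b^2 - 3*b + 1) = -1"
  shows "real n - 1 \<le> (5 * real n ^ 2 + 5 * real n + 2) / 2 * norm (b - a)"
proof -
  obtain j where j: "n = Suc j" using n by (cases n) auto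
  define d where "d = b - a"
  define E where "E m = b^m - a^m - of_nat m * a^(m-1) * d" for m
  define Q' where "Q' = of_nat (n+2) * a^(n+1) - 3 * of_nat (n+1) * a^n + of_nat n * a^(n-1)"
  have Qa: "a^(n+2) - 3*a^(n+1) + a^n + 1 = 0" using aq by (simp add: algebra_simps power2_eq_square)
  have Qb: "b^(n+2) - 3*b^(n+1) + b^n + 1 = 0" using bq by (simp add: algebra_simps power2_eq_square)
  have idt: "E (n+2) - 3 * E (n+1) + E n + Q' * d =
        (b^(n+2) - 3*b^(n+1) + b^n + 1) - (a^(n+2) - 3*a^(n+1) + a^n + 1)"
    unfolding E_def Q'_def by (simp add: algebra_simps)
  then have h0: "E (n+2) - 3 * E (n+1) + E n + Q' * d = 0" unfolding Qa Qb by simp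
  have "Q' * d = (E (n+2) - 3 * E (n+1) + E n + Q' * d) - (E (n+2) - 3 * E (n+1) + E n)" by simp
  then have "Q' * d = - (E (n+2) - 3 * E (n+1) + E n)" unfolding h0 by simp
  then have "norm (Q' * d) = norm (- (E (n+2) - 3 * E (n+1) + E n))" by (rule arg_cong)
  then have "norm Q' * norm d = norm (E (n+2) - 3 * E (n+1) + E n)" by (simp only: norm_mult norm_minus_cancel)
  also have "\<dots> \<le> norm (E (n+2)) + 3 * norm (E (n+1)) + norm (E n)"
    by (rule order_trans[OF norm_triangle_ineq], rule add_mono, rule order_trans[OF norm_triangle_ineq4])
       (auto simp: norm_mult)
  also have "\<dots> \<le> real (n+2) * (real (n+2) - 1) / 2 * norm d ^ 2 + 3 * (real (n+1) * (real (n+1) - 1) / 2 * norm d ^ 2)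
                  + real n * (real n - 1) / 2 * norm d ^ 2"
    unfolding E_def d_def using a1 b1
    by (intro add_mono mult_left_mono taylor_pow) auto
  also have "\<dots> = (5 * real n ^ 2 + 5 * real n + 2) / 2 * norm d ^ 2"
    by (simp add: field_simps power2_eq_square)
  finally have up: "norm Q' * norm d \<le> (5 * real n ^ 2 + 5 * real n + 2) / 2 * norm d ^ 2" .
  have aQ: "a * Q' = - of_nat (n+1) + a^n * (a^2 - 1)"
  proof -
    have "a * Q' - of_nat (n+1) * (a^n * (a^2 - 3*a + 1)) = a^n * (a^2 - 1)"
      unfolding Q'_def j by (simp add: algebra_simps power2_eq_square)
    then have h: "a * Q' - of_nat (n+1) * (-1) = a^n * (a^2 - 1)" unfolding aq .
    have "a * Q' = (a * Q' - of_nat (n+1) * (-1)) - of_nat (n+1)" by simp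
    then show ?thesis unfolding h by simp
  qed
  have "norm (a^n * (a^2 - 1)) \<le> 2"
  proof -
    have "norm (a^2 - 1) \<le> norm (a^2) + 1" using norm_triangle_ineq4[of "a^2" 1] by simp
    also have "\<dots> \<le> 2" using a1 by (simp add: norm_power power_le_one)
    finally have "norm (a^2 - 1) \<le> 2" .
    moreover have "norm (a^n) \<le> 1" using a1 by (simp add: norm_power power_le_one)
    ultimately have "norm (a^n) * norm (a^2 - 1) \<le> 1 * 2" by (intro mult_mono) auto
    then show ?thesis by (simp add: norm_mult)
  qed
  moreover have nn: "norm (- (of_nat (n+1)::complex)) = real (n+1)" by (simp only: norm_minus_cancel norm_of_nat)
  moreover have "norm (- (of_nat (n+1)::complex)) - norm (a^n * (a^2 - 1)) \<le> norm (- of_nat (n+1) + a^n * (a^2 - 1))"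
    by (rule norm_diff_ineq)
  ultimately have "real (n+1) - 2 \<le> norm (a * Q')" unfolding aQ by linarith
  also have "norm (a * Q') \<le> norm Q'" using a1 by (simp add: norm_mult mult_left_le_one_le)
  finally have lo: "real n - 1 \<le> norm Q'" by simp
  have d0: "norm d > 0" using ab unfolding d_def by simp
  have "(real n - 1) * norm d \<le> (5 * real n ^ 2 + 5 * real n + 2) / 2 * norm d * norm d"
    using up lo d0 by (smt (verit) mult_right_mono power2_eq_square mult.assoc)
  then show ?thesis using d0 unfolding d_def by simp
qed

lemma abs_Im_root:
  fixes z :: complex
  assumes zq: "z^n * (z^2 - 3*z + 1) = -1"
  defines "w \<equiv> Complex (Re z) \<bar>Im z\<bar>"
  shows "w^n * (w^2 - 3*w + 1) = -1" "norm w = norm z" "Re w = Re z" "Im w = \<bar>Im z\<bar>"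
proof -
  show "norm w = norm z" unfolding w_def by (simp add: cmod_def)
  show "Re w = Re z" "Im w = \<bar>Im z\<bar>" unfolding w_def by simp_all
  show "w^n * (w^2 - 3*w + 1) = -1"
  proof (cases "Im z \<ge> 0")
    case True
    then have "w = z" unfolding w_def by (simp add: complex_eq_iff)
    then show ?thesis using zq by simp
  next
    case False
    then have "w = cnj z" unfolding w_def by (simp add: complex_eq_iff)
    moreover have "cnj (z^n * (z^2 - 3*z + 1)) = cnj (-1)" using zq by simp
    ultimately show ?thesis by simp
  qed
qed

lemma u_bound:
  fixes z :: complex
  assumes "norm z < 1"
  shows "norm (z^2 - 3*z + 1) < 5"
proof -
  have "norm (z^2) < 1" using assms by (simp add: norm_power power_less_one_iff)
  have "norm (z^2 - 3*z + 1) \<le> norm (z^2) + norm (3*z) + 1"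
    by (rule order_trans[OF norm_triangle_ineq], rule add_mono, rule norm_triangle_ineq4) auto
  also have "\<dots> < 5" using assms \<open>norm (z^2) < 1\<close> by (simp add: norm_mult)
  finally show ?thesis .
qed

lemma close_mod:
  fixes z1 z2 :: complex
  assumes n: "n \<ge> 3"
    and z1q: "z1^n * (z1^2 - 3*z1 + 1) = -1" and z2q: "z2^n * (z2^2 - 3*z2 + 1) = -1"
    and z11: "norm z1 < 1" and z21: "norm z2 < 1" and gt: "norm z1 > norm z2"
  shows "norm z1 / norm z2 > 1 + 1.59 powr (- (real (Suc n) ^ 3))"
proof (rule ccontr)
  define K where "K = real (Suc n)"
  define \<eta> where "\<eta> = (1.59::real) powr (- (K ^ 3))"
  have K4: "K \<ge> 4" unfolding K_def using n by simp
  have hK: "K^3 = real (Suc n ^ 3)" unfolding K_def by simp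
  have e2: "(1.59::real) powr (K^3) = 1.59 ^ (Suc n ^ 3)"
    unfolding hK by (rule powr_realpow) simp
  have eta_eq: "\<eta> = 1 / 1.59 ^ (Suc n ^ 3)"
    unfolding \<eta>_def powr_minus e2 by (simp add: inverse_eq_divide)
  have big: "150000 * K ^ 3 < 1.59 ^ (Suc n ^ 3)" unfolding K_def using big_k[of "Suc n"] n by simp
  have eta0: "\<eta> > 0" unfolding eta_eq by simp
  have bigeta: "150000 * K ^ 3 * \<eta> < 1" unfolding eta_eq using big by (simp add: field_simps)
  have KK: "1 * 1 \<le> K * K" using K4 by (intro mult_mono) auto
  have "K * 1 \<le> K * (K * K)" using KK K4 by (intro mult_left_mono) auto
  then have K3: "K ^ 3 \<ge> K" by (simp add: power3_eq_cube)
  have "\<eta> * 1 \<le> \<eta> * (150000 * K ^ 3)" using K3 K4 eta0 by (intro mult_left_mono) auto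
  then have eta1: "\<eta> \<le> 1" using bigeta by (simp add: mult.commute mult.left_commute)
  assume "\<not> norm z1 / norm z2 > 1 + 1.59 powr (- (real (Suc n) ^ 3))"
  then have rat: "norm z1 / norm z2 \<le> 1 + \<eta>" unfolding \<eta>_def K_def by simp
  have n1: "n \<ge> 1" using n by simp
  define w1 where "w1 = Complex (Re z1) \<bar>Im z1\<bar>"
  define w2 where "w2 = Complex (Re z2) \<bar>Im z2\<bar>"
  note W1 = abs_Im_root[OF z1q, folded w1_def]
  note W2 = abs_Im_root[OF z2q, folded w2_def]
  define r1 where "r1 = norm z1"
  define r2 where "r2 = norm z2"
  define R1 where "R1 = r1^2"
  define R2 where "R2 = r2^2"
  define x1 where "x1 = Re z1"
  define x2 where "x2 = Re z2"
  define y1 where "y1 = \<bar>Im z1\<bar>"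
  define y2 where "y2 = \<bar>Im z2\<bar>"
  define A1 where "A1 = AA x1 R1"
  define A2 where "A2 = AA x2 R2"
  define \<delta> where "\<delta> = R1 - R2"
  have r20: "r2 > 0" unfolding r2_def using root_nonzero[OF n1 z2q] by simp
  have r21: "r2 < 1" and r11: "r1 < 1" and r12: "r2 < r1" using z11 z21 gt unfolding r1_def r2_def by auto
  have R1x: "R1 = x1^2 + y1^2" unfolding R1_def r1_def x1_def y1_def by (simp add: cmod_power2)
  have R2x: "R2 = x2^2 + y2^2" unfolding R2_def r2_def x2_def y2_def by (simp add: cmod_power2)
  have x1r: "\<bar>x1\<bar> \<le> r1" unfolding x1_def r1_def by (rule abs_Re_le_cmod)
  have x2r: "\<bar>x2\<bar> \<le> r2" unfolding x2_def r2_def by (rule abs_Re_le_cmod)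
  have y0: "y1 \<ge> 0" "y2 \<ge> 0" unfolding y1_def y2_def by auto
  have R12: "R2 < R1" unfolding R1_def R2_def using r20 r12 by (simp add: power_strict_mono)
  have d0: "\<delta> > 0" unfolding \<delta>_def using R12 by simp
  have R11: "R1 \<le> 1" unfolding R1_def using r11 r20 r12 by (simp add: power_le_one)
  have R20: "R2 \<ge> 0" unfolding R2_def by simp
  have "r1 \<le> (1 + \<eta>) * r2" using rat r20 unfolding r1_def r2_def by (simp add: divide_le_eq)
  then have "r1^2 \<le> ((1 + \<eta>) * r2)^2" using r20 r12 by (intro power_mono) auto
  then have "R1 \<le> (1 + \<eta>)^2 * R2" unfolding R1_def R2_def by (simp add: power_mult_distrib)
  moreover have "(1 + \<eta>)^2 * R2 \<le> R2 + 3 * \<eta>"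
  proof -
    have "\<eta> * \<eta> \<le> \<eta> * 1" using eta0 eta1 by (intro mult_left_mono) auto
    then have "(2 * \<eta> + \<eta> * \<eta>) * R2 \<le> 3 * \<eta> * 1"
      using R20 R11 R12 eta0 by (intro mult_mono) auto
    then show ?thesis by (simp add: power2_eq_square algebra_simps)
  qed
  ultimately have d3: "\<delta> \<le> 3 * \<eta>" unfolding \<delta>_def by simp
  have A1r: "R1^n * A1 = 1" unfolding A1_def R1_def r1_def x1_def using root_mod[OF z1q] .
  have A2r: "R2^n * A2 = 1" unfolding A2_def R2_def r2_def x2_def using root_mod[OF z2q] .
  have A1b: "A1 \<le> 25" "A1 \<ge> 0"
  proof -
    have "A1 = (norm (z1^2 - 3*z1 + 1))^2" unfolding A1_def x1_def R1_def r1_def by (simp add: AA_identity)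
    moreover have "norm (z1^2 - 3*z1 + 1) < 5" using u_bound[OF z11] .
    moreover have "(norm (z1^2 - 3*z1 + 1))^2 \<le> 5^2" using calculation(2) by (intro power_mono) auto
    ultimately show "A1 \<le> 25" "A1 \<ge> 0" by simp_all
  qed
  have A2b: "A2 \<le> 25" "A2 \<ge> 0"
  proof -
    have "A2 = (norm (z2^2 - 3*z2 + 1))^2" unfolding A2_def x2_def R2_def r2_def by (simp add: AA_identity)
    moreover have "norm (z2^2 - 3*z2 + 1) < 5" using u_bound[OF z21] .
    moreover have "(norm (z2^2 - 3*z2 + 1))^2 \<le> 5^2" using calculation(2) by (intro power_mono) auto
    ultimately show "A2 \<le> 25" "A2 \<ge> 0" by simp_all
  qed
  have AAd: "A2 - A1 = A1 * A2 * (R1^n - R2^n)"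
  proof -
    have h1: "A1 * A2 * R1^n = A2" using A1r by (simp add: algebra_simps)
    have h2: "A1 * A2 * R2^n = A1" using A2r by (simp add: algebra_simps)
    have "A1 * A2 * (R1^n - R2^n) = A1 * A2 * R1^n - A1 * A2 * R2^n" by (simp add: right_diff_distrib)
    then show ?thesis unfolding h1 h2 by simp
  qed
  have pd: "R1^n - R2^n \<le> real n * \<delta>" unfolding \<delta>_def using pow_diff_le[of R2 R1 n] R20 R12 R11 by simp
  have pd0: "R1^n - R2^n \<ge> 0" using R20 R12 by (simp add: power_mono)
  have "A1 * A2 \<le> 25 * 25" using A1b A2b by (intro mult_mono) auto
  then have "A1 * A2 * (R1^n - R2^n) \<le> (25 * 25) * (real n * \<delta>)"
    using pd pd0 A1b A2b d0 by (intro mult_mono) auto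
  then have dA: "\<bar>A2 - A1\<bar> \<le> 625 * real n * \<delta>"
    using AAd A1b A2b pd0 by simp
  define L where "L = 500 * K * \<delta>"
  define F where "F = 6 * R2 + 6 - 4 * x1 - 4 * x2"
  have idt: "A2 - A1 = (x1 - x2) * F + \<delta> * (6 * x1 - R1 - R2 - 7)"
    unfolding A1_def A2_def AA_def F_def \<delta>_def by (simp add: algebra_simps power2_eq_square)
  have F43: "F \<ge> 4/3"
  proof -
    have "0 \<le> 6 * (r2 - 1/3)^2" by simp
    then have "4 * r2 - 2/3 \<le> 6 * R2" unfolding R2_def by (simp add: power2_eq_square algebra_simps)
    then show ?thesis unfolding F_def using x1r x2r r11 abs_ge_self[of x1] abs_ge_self[of x2] by linarith
  qed
  have t15: "\<bar>6 * x1 - R1 - R2 - 7\<bar> \<le> 15" using x1r r11 R11 R20 R12 by (simp add: abs_le_iff)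
  have "\<bar>(x1 - x2) * F\<bar> = \<bar>(A2 - A1) - \<delta> * (6 * x1 - R1 - R2 - 7)\<bar>" using idt by simp
  also have "\<dots> \<le> \<bar>A2 - A1\<bar> + \<bar>\<delta> * (6 * x1 - R1 - R2 - 7)\<bar>" by (rule abs_triangle_ineq4)
  also have "\<bar>\<delta> * (6 * x1 - R1 - R2 - 7)\<bar> = \<delta> * \<bar>6 * x1 - R1 - R2 - 7\<bar>" using d0 by (simp add: abs_mult)
  also have "\<delta> * \<bar>6 * x1 - R1 - R2 - 7\<bar> \<le> \<delta> * 15" using t15 d0 by (intro mult_left_mono) auto
  finally have "\<bar>x1 - x2\<bar> * F \<le> 625 * real n * \<delta> + \<delta> * 15" using dA F43 by (simp add: abs_mult)
  moreover have "\<bar>x1 - x2\<bar> * (4/3) \<le> \<bar>x1 - x2\<bar> * F" using F43 by (intro mult_left_mono) auto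
  ultimately have "\<bar>x1 - x2\<bar> * (4/3) \<le> 625 * real n * \<delta> + \<delta> * 15" by linarith
  moreover have "625 * real n * \<delta> + \<delta> * 15 \<le> (4/3) * L"
  proof -
    have c: "625 * real n + 15 \<le> (4/3) * (500 * K)" unfolding K_def by simp
    then have "(625 * real n + 15) * \<delta> \<le> ((4/3) * (500 * K)) * \<delta>" using d0 by (intro mult_right_mono) auto
    then show ?thesis unfolding L_def by (simp add: algebra_simps)
  qed
  ultimately have "\<bar>x1 - x2\<bar> * (4/3) \<le> 4/3 * L" by (rule order_trans)
  then have xL: "\<bar>x1 - x2\<bar> \<le> L" by simp
  have L1: "L \<le> 1"
  proof -
    have "L \<le> 500 * K * (3 * \<eta>)" unfolding L_def using d3 K4 by (intro mult_left_mono) auto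
    also have "\<dots> \<le> 150000 * K^3 * \<eta>" using K3 eta0 K4 by (simp add: mult_right_mono)
    finally show ?thesis using bigeta by linarith
  qed
  have "1 * \<delta> \<le> (500 * K) * \<delta>" using d0 K4 by (intro mult_right_mono) auto
  then have dL: "\<delta> \<le> L" unfolding L_def by simp
  have xs: "\<bar>x1 + x2\<bar> \<le> 2" using x1r x2r r11 r21 by linarith
  have "(y1 - y2)^2 \<le> \<bar>y1^2 - y2^2\<bar>"
  proof -
    have "(y1 - y2)^2 = \<bar>y1 - y2\<bar> * \<bar>y1 - y2\<bar>" by (simp add: power2_eq_square abs_mult_self_eq)
    also have "\<dots> \<le> \<bar>y1 - y2\<bar> * (y1 + y2)" using y0 by (intro mult_left_mono) auto
    also have "\<dots> = \<bar>(y1 - y2) * (y1 + y2)\<bar>" using y0 by (simp add: abs_mult)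
    also have "(y1 - y2) * (y1 + y2) = y1^2 - y2^2" by (simp add: power2_eq_square algebra_simps)
    finally show ?thesis .
  qed
  also have "y1^2 - y2^2 = \<delta> - (x1 - x2) * (x1 + x2)" unfolding \<delta>_def using R1x R2x by (simp add: algebra_simps power2_eq_square)
  also have "\<bar>\<delta> - (x1 - x2) * (x1 + x2)\<bar> \<le> \<delta> + \<bar>x1 - x2\<bar> * 2"
  proof -
    have P: "\<bar>(x1 - x2) * (x1 + x2)\<bar> \<le> \<bar>x1 - x2\<bar> * 2" unfolding abs_mult using xs by (intro mult_left_mono) auto
    have "\<bar>\<delta> - (x1 - x2) * (x1 + x2)\<bar> \<le> \<bar>\<delta>\<bar> + \<bar>(x1 - x2) * (x1 + x2)\<bar>" by (rule abs_triangle_ineq4)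
    also have "\<dots> \<le> \<delta> + \<bar>x1 - x2\<bar> * 2" using P d0 by (intro add_mono) auto
    finally show ?thesis .
  qed
  also have "\<delta> + \<bar>x1 - x2\<bar> * 2 \<le> \<delta> + 2 * L" using xL by simp
  finally have yb: "(y1 - y2)^2 \<le> \<delta> + 2 * L" .
  have xb: "(x1 - x2)^2 \<le> L"
  proof -
    have "(x1 - x2)^2 = \<bar>x1 - x2\<bar> * \<bar>x1 - x2\<bar>" by (simp add: power2_eq_square abs_mult_self_eq)
    also have "\<dots> \<le> L * L" using xL by (intro mult_mono) auto
    also have "\<dots> \<le> L * 1" using L1 xL by (intro mult_left_mono) auto
    finally show ?thesis by simp
  qed
  have "(norm (w1 - w2))^2 = (x1 - x2)^2 + (y1 - y2)^2"
    unfolding cmod_power2 using W1(3,4) W2(3,4) unfolding x1_def x2_def y1_def y2_def by simp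
  also have "\<dots> \<le> 4 * L" using xb yb dL by linarith
  also have "\<dots> = (2000 * K) * \<delta>" unfolding L_def by simp
  also have "\<dots> \<le> (2000 * K) * (3 * \<eta>)" using d3 K4 by (intro mult_left_mono) auto
  also have "\<dots> = 6000 * K * \<eta>" by simp
  finally have wup: "(norm (w1 - w2))^2 \<le> 6000 * K * \<eta>" .
  have w11: "norm w1 < 1" using W1(2) z11 by simp
  have w21: "norm w2 < 1" using W2(2) z21 by simp
  have wne: "w2 \<noteq> w1" using W1(2) W2(2) gt by auto
  have sp: "real n - 1 \<le> (5 * real n ^ 2 + 5 * real n + 2) / 2 * norm (w1 - w2)"
    using sep[of n w2 w1] n w11 w21 wne W1(1) W2(1) by simp
  have "K / 2 \<le> real n - 1" unfolding K_def using n by simp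
  also note sp
  also have "(5 * real n ^ 2 + 5 * real n + 2) / 2 * norm (w1 - w2) \<le> (5 * K^2 / 2) * norm (w1 - w2)"
    unfolding K_def by (intro mult_right_mono) (auto simp: power2_eq_square algebra_simps)
  finally have "K / 2 \<le> (5 * K^2 / 2) * norm (w1 - w2)" .
  then have "1 / (5 * K) \<le> norm (w1 - w2)" using K4 by (simp add: field_simps power2_eq_square)
  then have "(1 / (5 * K))^2 \<le> (norm (w1 - w2))^2" using K4 by (intro power_mono) auto
  then have "(1 / (5 * K))^2 \<le> 6000 * K * \<eta>" using wup by linarith
  then have "1 \<le> 150000 * K^3 * \<eta>" using K4 by (simp add: field_simps power2_eq_square power3_eq_cube)
  then show False using bigeta by linarith
qed

lemma eta_le1: "(1.59::real) powr (- x) \<le> 1" if "x \<ge> 0" for x :: real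
proof -
  have "1 \<le> (1.59::real) powr x" using that by (intro ge_one_powr_ge_zero) auto
  then show ?thesis by (simp add: powr_minus inverse_le_1_iff)
qed

lemma part_i:
  fixes zi zj :: complex
  assumes n: "n \<ge> 1" and g1: "\<gamma> > 1" and g0: "psir n \<gamma> = 0"
    and ri: "poly (Psi (Suc n)) zi = 0" and rj: "poly (Psi (Suc n)) zj = 0"
    and gt: "norm zi > norm zj"
  shows "norm zi / norm zj > 1 + 1.59 powr (- (real (Suc n) ^ 3))"
proof -
  have e1: "(1.59::real) powr (- (real (Suc n) ^ 3)) \<le> 1" by (rule eta_le1) simp
  have qi: "zi^n * (zi^2 - 3*zi + 1) = -1" using psi_root_iff[OF n] ri by auto
  have qj: "zj^n * (zj^2 - 3*zj + 1) = -1" using psi_root_iff[OF n] rj by auto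
  have j0: "norm zj > 0" using root_nonzero[OF n qj] by simp
  have pi: "zi = complex_of_real \<gamma> \<or> norm zi < 1" using pisot[OF n g1 g0 ri] .
  have pj: "zj = complex_of_real \<gamma> \<or> norm zj < 1" using pisot[OF n g1 g0 rj] .
  have j1: "norm zj < 1"
  proof (rule ccontr)
    assume "\<not> norm zj < 1"
    then have "zj = complex_of_real \<gamma>" using pj by auto
    then have "norm zi > \<gamma>" using gt g1 by simp
    then show False using pi g1 by auto
  qed
  show ?thesis
  proof (cases "zi = complex_of_real \<gamma>")
    case True
    then have "norm zi = \<gamma>" using g1 by simp
    then have "norm zi / norm zj > \<gamma>" using j0 j1 g1 by (simp add: less_divide_eq)
    moreover have "\<gamma> > 2" using gamma_facts(1)[OF n g1 g0] .
    ultimately show ?thesis using e1 by linarith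
  next
    case False
    then have i1: "norm zi < 1" using pi by auto
    consider "n = 1" | "n = 2" | "n \<ge> 3" using n by linarith
    then show ?thesis
    proof cases
      case 1
      have "zi^2 - 2*zi - 1 = 0" "zj^2 - 2*zj - 1 = 0" using ri rj 1 psi2 by (simp_all add: numeral_2_eq_2)
      then have "(zi - zj) * (zi + zj - 2) = 0" by (simp add: algebra_simps power2_eq_square)
      moreover have "zi \<noteq> zj" using gt by auto
      ultimately have "zi + zj = 2" by simp
      moreover have "norm (zi + zj) < 2" using norm_triangle_ineq[of zi zj] i1 j1 by linarith
      ultimately show ?thesis by simp
    next
      case 2
      have r3i: "poly (Psi 3) zi = 0" using ri 2 by (simp add: numeral_3_eq_3)
      have r3j: "poly (Psi 3) zj = 0" using rj 2 by (simp add: numeral_3_eq_3)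
      have zjg: "zj \<noteq> complex_of_real \<gamma>" using j1 g1 by auto
      have "(norm zi)^2 = 1 / \<gamma>" using k3_inner[OF g1 _ r3i False] g0 2 by simp
      moreover have "(norm zj)^2 = 1 / \<gamma>" using k3_inner[OF g1 _ r3j zjg] g0 2 by simp
      ultimately have "(norm zi)^2 = (norm zj)^2" by simp
      then have "norm zi = norm zj" using power2_eq_iff_nonneg[of "norm zi" "norm zj"] by simp
      then show ?thesis using gt by simp
    next
      case 3
      show ?thesis using close_mod[OF 3 qi qj i1 j1 gt] .
    qed
  qed
qed

theorem lemma3p1:
  fixes k :: nat and \<gamma> :: real
  assumes hk: "k \<ge> 2"
    and h\<gamma>root: "poly (Psi k) (complex_of_real \<gamma>) = 0"
    and h\<gamma>1: "\<gamma> > 1"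
  shows
    "(\<forall>zi zj. poly (Psi k) zi = 0 \<longrightarrow> poly (Psi k) zj = 0 \<longrightarrow> norm zi > norm zj \<longrightarrow>
        norm zi / norm zj > 1 + 1.59 powr (- (real k ^ 3)))
     \<and> (0.276 \<le> g k \<gamma> \<and> g k \<gamma> \<le> 0.5)
     \<and> (\<forall>z. poly (Psi k) z = 0 \<longrightarrow> z \<noteq> complex_of_real \<gamma> \<longrightarrow>
        norm (g k z) < (if k = 2 then 1 else min 1 (2 / (real k - 2))))
     \<and> (\<forall>zk. poly (Psi k) zk = 0 \<longrightarrow> (\<forall>z. poly (Psi k) z = 0 \<longrightarrow> norm zk \<le> norm z) \<longrightarrow>
        norm zk < 1 - ln \<gamma> / (2 * real k) \<and>
        norm (g k zk) > ln \<gamma> / (2 * real k * (5 * real k + 2)))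
     \<and> (\<forall>zi zj. poly (Psi k) zi = 0 \<longrightarrow> poly (Psi k) zj = 0 \<longrightarrow> zi \<noteq> zj \<longrightarrow>
        norm zi = norm zj \<longrightarrow> zj = cnj zi)"
proof -
  obtain n where kn: "k = Suc n" using hk by (cases k) auto
  have n: "n \<ge> 1" using hk kn by simp
  have "complex_of_real (psir n \<gamma>) = 0" using h\<gamma>root psi_real[of n \<gamma>] kn by simp
  then have g0: "psir n \<gamma> = 0" by (metis of_real_eq_0_iff)
  have groot: "poly (Psi (Suc n)) (complex_of_real \<gamma>) = 0" using h\<gamma>root kn by simp
  have P1: "\<forall>zi zj. poly (Psi k) zi = 0 \<longrightarrow> poly (Psi k) zj = 0 \<longrightarrow> norm zi > norm zj \<longrightarrow>
        norm zi / norm zj > 1 + 1.59 powr (- (real k ^ 3))"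
    using part_i[OF n h\<gamma>1 g0] unfolding kn by blast
  have P2: "0.276 \<le> g k \<gamma> \<and> g k \<gamma> \<le> 0.5" using part_ii[OF n h\<gamma>1 g0] unfolding kn .
  have P3: "\<forall>z. poly (Psi k) z = 0 \<longrightarrow> z \<noteq> complex_of_real \<gamma> \<longrightarrow>
        norm (g k z) < (if k = 2 then 1 else min 1 (2 / (real k - 2)))"
    using part_iii[OF n h\<gamma>1 g0] unfolding kn by blast
  have P4: "\<forall>zk. poly (Psi k) zk = 0 \<longrightarrow> (\<forall>z. poly (Psi k) z = 0 \<longrightarrow> norm zk \<le> norm z) \<longrightarrow>
        norm zk < 1 - ln \<gamma> / (2 * real k) \<and>
        norm (g k zk) > ln \<gamma> / (2 * real k * (5 * real k + 2))"
    using part_iv[OF n h\<gamma>1 g0 groot] unfolding kn by blast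
  have P5: "\<forall>zi zj. poly (Psi k) zi = 0 \<longrightarrow> poly (Psi k) zj = 0 \<longrightarrow> zi \<noteq> zj \<longrightarrow>
        norm zi = norm zj \<longrightarrow> zj = cnj zi"
    using part_v[OF n] unfolding kn by blast
  show ?thesis using P1 P2 P3 P4 P5 by blast
qed

end
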